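(* Let $V$ be a real vector space of dimension $m\ge3$ with a positive definite inner product, and let $R\neq0$ be a Jacobi-Tsankov algebraic curvature tensor on $V$ such that $r(x)<m-1$ for all $x\in V$. Let $x\in S(V)$ with $r(x)\neq0$, and set $W(x)=\mathbb{R}x\oplus\operatorname{Range}(J(x))$. If $w$ is a unit vector in $W(x)$, then: \begin{enumerate} \item $\operatorname{Range}(J(w))\subset W(x)$ and $J(w)$ vanishes on $W(x)^\perp$; \item $J(w)$ is similar to $J(x)$; \item $J(x)$ has exactly two eigenvalues. \end{enumerate}
   Context: An algebraic curvature tensor is $R\in\otimes^4V^*$ satisfying $R(x,y,z,w)=R(z,w,x,y)=-R(y,x,z,w)$ and $R(x,y,z,w)+R(y,z,x,w)+R(z,x,y,w)=0$. The curvature operator $\mathcal{R}(x,y)$ is defined by $\langle\mathcal{R}(x,y)z,w\rangle=R(x,y,z,w)$; the Jacobi operator is $J(x):y\mapsto\mathcal{R}(y,x)x$, and $r(x)=\operatorname{Rank}J(x)$. $S(V)$ is the unit sphere of $V$. $R$ is Jacobi-Tsankov if $x\perp y$ implies $J(x)J(y)=J(y)J(x)$. *)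

theory Defs
  imports "HOL-Analysis.Analysis"
begin

definition alg_curv_tensor :: "('a::euclidean_space \<Rightarrow> 'a \<Rightarrow> 'a \<Rightarrow> 'a \<Rightarrow> real) \<Rightarrow> bool" where
  "alg_curv_tensor R \<longleftrightarrow>
     (\<forall>y z w. linear (\<lambda>x. R x y z w)) \<and>
     (\<forall>x z w. linear (\<lambda>y. R x y z w)) \<and>
     (\<forall>x y w. linear (\<lambda>z. R x y z w)) \<and>
     (\<forall>x y z. linear (\<lambda>w. R x y z w)) \<and>
     (\<forall>x y z w. R x y z w = R z w x y) \<and>
     (\<forall>x y z w. R x y z w = - R y x z w) \<and>
     (\<forall>x y z w. R x y z w + R y z x w + R z x y w = 0)"

text \<open>Curvature operator: the unique vector with inner product R(x,y,z,.) (Riesz).\<close>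
definition curv_op :: "('a::euclidean_space \<Rightarrow> 'a \<Rightarrow> 'a \<Rightarrow> 'a \<Rightarrow> real) \<Rightarrow> 'a \<Rightarrow> 'a \<Rightarrow> 'a \<Rightarrow> 'a" where
  "curv_op R x y z = (\<Sum>b\<in>Basis. R x y z b *\<^sub>R b)"

definition jacobi_op :: "('a::euclidean_space \<Rightarrow> 'a \<Rightarrow> 'a \<Rightarrow> 'a \<Rightarrow> real) \<Rightarrow> 'a \<Rightarrow> 'a \<Rightarrow> 'a" where
  "jacobi_op R x = (\<lambda>y. curv_op R y x x)"

definition jrank :: "('a::euclidean_space \<Rightarrow> 'a \<Rightarrow> 'a \<Rightarrow> 'a \<Rightarrow> real) \<Rightarrow> 'a \<Rightarrow> nat" where
  "jrank R x = dim (range (jacobi_op R x))"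

definition jacobi_tsankov :: "('a::euclidean_space \<Rightarrow> 'a \<Rightarrow> 'a \<Rightarrow> 'a \<Rightarrow> real) \<Rightarrow> bool" where
  "jacobi_tsankov R \<longleftrightarrow>
     (\<forall>x y. x \<bullet> y = 0 \<longrightarrow> jacobi_op R x \<circ> jacobi_op R y = jacobi_op R y \<circ> jacobi_op R x)"

definition Wsp :: "('a::euclidean_space \<Rightarrow> 'a \<Rightarrow> 'a \<Rightarrow> 'a \<Rightarrow> real) \<Rightarrow> 'a \<Rightarrow> 'a set" where
  "Wsp R x = span (insert x (range (jacobi_op R x)))"

definition similar_op :: "('a::euclidean_space \<Rightarrow> 'a) \<Rightarrow> ('a \<Rightarrow> 'a) \<Rightarrow> bool" where
  "similar_op A B \<longleftrightarrow> (\<exists>T. linear T \<and> bij T \<and> A \<circ> T = T \<circ> B)"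

definition eigenvalues_op :: "('a::euclidean_space \<Rightarrow> 'a) \<Rightarrow> real set" where
  "eigenvalues_op A = {c. \<exists>v. v \<noteq> 0 \<and> A v = c *\<^sub>R v}"

end

theory Submission
  imports Defs
begin


lemma quad_zero:
  fixes g K :: real
  assumes H: "\<And>t. 2 * t * g \<le> t^2 * K"
  shows "g = 0"
proof -
  define c where "c = \<bar>K\<bar> + 1"
  have c: "c > 0" "K < c" unfolding c_def by auto
  have h: "2 * (g / c) * g \<le> (g / c)^2 * K" using H .
  have "2 * (g / c) * g * (c * c) \<le> (g / c)^2 * K * (c * c)"
    using h c by (intro mult_right_mono) auto
  then have h2: "2 * g * g * c \<le> g * g * K" using c by (simp add: power2_eq_square field_simps)
  have "g * g * K \<le> g * g * c" using c by (intro mult_left_mono) auto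
  with h2 have "g * g * c \<le> 0" by linarith
  then have "g * g \<le> 0" using c by (simp add: mult_le_0_iff)
  then show ?thesis by (metis mult_eq_0_iff order_antisym_conv zero_le_square)
qed

lemma selfadj_eigvec:
  fixes A :: "'a::euclidean_space \<Rightarrow> 'a"
  assumes lin: "linear A" and sym: "\<And>u v. A u \<bullet> v = u \<bullet> A v"
    and sub: "subspace S" and inv: "\<And>u. u \<in> S \<Longrightarrow> A u \<in> S"
    and u0: "u0 \<in> S" "u0 \<noteq> 0"
  shows "\<exists>v\<in>S. v \<noteq> 0 \<and> (\<exists>c. A v = c *\<^sub>R v)"
proof -
  define K where "K = S \<inter> sphere 0 1"
  have cK: "compact K" unfolding K_def
    by (intro closed_Int_compact closed_subspace sub compact_sphere)
  have "(1 / norm u0) *\<^sub>R u0 \<in> K" unfolding K_def using u0 sub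
    by (simp add: subspace_scale)
  then have neK: "K \<noteq> {}" by auto
  have bl: "bounded_linear A" using lin linear_conv_bounded_linear by auto
  have cont: "continuous_on K (\<lambda>u. A u \<bullet> u)"
    by (intro continuous_intros linear_continuous_on bl)
  obtain v where vK: "v \<in> K" and vmax: "\<And>y. y \<in> K \<Longrightarrow> A y \<bullet> y \<le> A v \<bullet> v"
    using continuous_attains_sup[OF cK neK cont] by blast
  have vS: "v \<in> S" and nv: "norm v = 1" using vK unfolding K_def by auto
  have vv: "v \<bullet> v = 1" using nv by (metis power2_norm_eq_inner one_power2)
  define M where "M = A v \<bullet> v"
  have key: "A v \<bullet> u = 0" if uS: "u \<in> S" and uv: "u \<bullet> v = 0" for u
  proof -
    have "2 * t * (A v \<bullet> u) \<le> t^2 * (M * (u \<bullet> u) - A u \<bullet> u)" for t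
    proof -
      define w where "w = v + t *\<^sub>R u"
      have wS: "w \<in> S" unfolding w_def using vS uS sub by (simp add: subspace_add subspace_scale)
      have ww: "w \<bullet> w = 1 + t^2 * (u \<bullet> u)"
        unfolding w_def using vv uv by (simp add: inner_add_left inner_add_right inner_commute power2_eq_square)
      have wpos: "w \<bullet> w > 0" using ww by (simp add: add_pos_nonneg)
      then have nw: "norm w > 0" by (simp add: norm_eq_sqrt_inner)
      have "(1 / norm w) *\<^sub>R w \<in> K" unfolding K_def using wS sub nw by (simp add: subspace_scale)
      from vmax[OF this] have "(A w \<bullet> w) / (norm w)^2 \<le> M"
        by (simp add: M_def linear_scale[OF lin] power2_eq_square)
      then have "A w \<bullet> w \<le> M * (w \<bullet> w)" using nw
        by (simp add: divide_le_eq power2_norm_eq_inner)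
      moreover have "A w \<bullet> w = M + 2 * t * (A v \<bullet> u) + t^2 * (A u \<bullet> u)"
        unfolding w_def M_def
        by (simp add: linear_add[OF lin] linear_scale[OF lin] inner_add_left inner_add_right
             sym[of u v] inner_commute[of v "A u"] inner_commute[of u "A v"] power2_eq_square algebra_simps)
      ultimately show ?thesis using ww by (simp add: algebra_simps)
    qed
    then show ?thesis by (rule quad_zero)
  qed
  define u where "u = A v - (A v \<bullet> v) *\<^sub>R v"
  have uS: "u \<in> S" unfolding u_def using vS inv sub by (simp add: subspace_diff subspace_scale)
  have uv: "u \<bullet> v = 0" unfolding u_def using vv by (simp add: inner_diff_left)
  have "u \<bullet> u = A v \<bullet> u - (A v \<bullet> v) * (v \<bullet> u)" unfolding u_def by (simp add: inner_diff_left)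
  also have "\<dots> = 0" using key[OF uS uv] uv by (simp add: inner_commute)
  finally have "u = 0" by simp
  then have "A v = (A v \<bullet> v) *\<^sub>R v" unfolding u_def by simp
  moreover have "v \<noteq> 0" using nv by auto
  ultimately show ?thesis using vS by blast
qed



lemma vec_eqI: fixes u v :: "'a::real_inner"
  assumes "\<And>d. u \<bullet> d = v \<bullet> d" shows "u = v"
proof -
  have "(u - v) \<bullet> (u - v) = 0" using assms[of "u - v"] by (simp add: inner_diff_left)
  then show ?thesis by simp
qed

locale jtl =
  fixes R :: "'a::euclidean_space \<Rightarrow> 'a \<Rightarrow> 'a \<Rightarrow> 'a \<Rightarrow> real"
  assumes acs: "alg_curv_tensor R" and jts: "jacobi_tsankov R"
begin

lemma lin1: "linear (\<lambda>x. R x y z w)" using acs unfolding alg_curv_tensor_def by (elim conjE allE)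
lemma lin2: "linear (\<lambda>y. R x y z w)" using acs unfolding alg_curv_tensor_def by (elim conjE allE)
lemma lin3: "linear (\<lambda>z. R x y z w)" using acs unfolding alg_curv_tensor_def by (elim conjE allE)
lemma lin4: "linear (\<lambda>w. R x y z w)" using acs unfolding alg_curv_tensor_def by (elim conjE allE) simp
lemma pair_sym: "R x y z w = R z w x y" using acs unfolding alg_curv_tensor_def by blast
lemma anti: "R x y z w = - R y x z w" using acs unfolding alg_curv_tensor_def by blast
lemma anti2: "R x y z w = - R x y w z"
proof -
  have "R x y z w = R z w x y" by (rule pair_sym)
  also have "\<dots> = - R w z x y" by (rule anti)
  also have "R w z x y = R x y w z" by (rule pair_sym)
  finally show ?thesis .
qed
lemma R_xx: "R x x z w = 0"
  using anti[of x x z w] by simp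

lemma R_add1: "R (a + b) y z w = R a y z w + R b y z w" using linear_add[OF lin1] .
lemma R_add2: "R x (a + b) z w = R x a z w + R x b z w" using linear_add[OF lin2] .
lemma R_add3: "R x y (a + b) w = R x y a w + R x y b w" using linear_add[OF lin3] .
lemma R_add4: "R x y z (a + b) = R x y z a + R x y z b" using linear_add[OF lin4] .
lemma R_diff1: "R (a - b) y z w = R a y z w - R b y z w" using linear_diff[OF lin1] .
lemma R_diff2: "R x (a - b) z w = R x a z w - R x b z w" using linear_diff[OF lin2] .
lemma R_diff3: "R x y (a - b) w = R x y a w - R x y b w" using linear_diff[OF lin3] .
lemma R_diff4: "R x y z (a - b) = R x y z a - R x y z b" using linear_diff[OF lin4] .
lemma R_scale1: "R (c *\<^sub>R a) y z w = c * R a y z w" using linear_scale[OF lin1] by simp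
lemma R_scale2: "R x (c *\<^sub>R a) z w = c * R x a z w" using linear_scale[OF lin2] by simp
lemma R_scale3: "R x y (c *\<^sub>R a) w = c * R x y a w" using linear_scale[OF lin3] by simp
lemma R_scale4: "R x y z (c *\<^sub>R a) = c * R x y z a" using linear_scale[OF lin4] by simp
lemma R_zero1: "R 0 y z w = 0" using R_scale1[of 0] by simp
lemma R_zero2: "R x 0 z w = 0" using R_scale2[of _ 0] by simp
lemma R_zero3: "R x y 0 w = 0" using R_scale3[of _ _ 0] by simp
lemma R_zero4: "R x y z 0 = 0" using R_scale4[of _ _ _ 0] by simp
lemma R_neg1: "R (- a) y z w = - R a y z w" using R_scale1[of "-1"] by simp
lemma R_neg2: "R x (- a) z w = - R x a z w" using R_scale2[of _ "-1"] by simp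
lemma R_neg3: "R x y (- a) w = - R x y a w" using R_scale3[of _ _ "-1"] by simp
lemma R_neg4: "R x y z (- a) = - R x y z a" using R_scale4[of _ _ _ "-1"] by simp

lemmas Rsimps = R_add1 R_add2 R_add3 R_add4 R_diff1 R_diff2 R_diff3 R_diff4
  R_scale1 R_scale2 R_scale3 R_scale4 R_zero1 R_zero2 R_zero3 R_zero4
  R_neg1 R_neg2 R_neg3 R_neg4

lemma curv_inner: "curv_op R a b c \<bullet> d = R a b c d"
proof -
  have "curv_op R a b c \<bullet> d = (\<Sum>e\<in>Basis. R a b c e * (e \<bullet> d))"
    unfolding curv_op_def by (simp add: inner_sum_left)
  also have "\<dots> = R a b c (\<Sum>e\<in>Basis. (d \<bullet> e) *\<^sub>R e)"
    by (simp add: linear_sum[OF lin4] R_scale4 inner_commute mult.commute)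
  also have "\<dots> = R a b c d" by (simp add: euclidean_representation)
  finally show ?thesis .
qed

abbreviation J where "J \<equiv> jacobi_op R"

lemma J_inner: "J p u \<bullet> d = R u p p d"
  unfolding jacobi_op_def by (simp add: curv_inner)

lemma R_swap: "R u p q v = R v q p u"
proof -
  have "R u p q v = R q v u p" by (rule pair_sym)
  also have "\<dots> = - R v q u p" by (rule anti)
  also have "R v q u p = - R v q p u" by (rule anti2)
  finally show ?thesis by simp
qed
lemma J_sym: "J p u \<bullet> v = u \<bullet> J p v"
proof -
  have "u \<bullet> J p v = J p v \<bullet> u" by (rule inner_commute)
  then show ?thesis by (simp add: J_inner R_swap[of u p p v])
qed

lemma J_self: "J p p = 0"
  by (rule vec_eqI) (simp add: J_inner R_xx)

lemma J_add: "J p (u + v) = J p u + J p v"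
  by (rule vec_eqI) (simp add: J_inner inner_add_left Rsimps)
lemma J_diff: "J p (u - v) = J p u - J p v"
  by (rule vec_eqI) (simp add: J_inner inner_diff_left Rsimps)
lemma J_scale: "J p (c *\<^sub>R u) = c *\<^sub>R J p u"
  by (rule vec_eqI) (simp add: J_inner Rsimps)
lemma J_zero: "J p 0 = 0"
  by (rule vec_eqI) (simp add: J_inner Rsimps)
lemma J_lin: "linear (J p)"
  by (rule linearI) (simp_all add: J_add J_scale)

definition B where "B p q u = curv_op R u p q + curv_op R u q p"

lemma B_inner: "B p q u \<bullet> d = R u p q d + R u q p d"
  unfolding B_def by (simp add: inner_add_left curv_inner)

lemma B_add: "B p q (u + v) = B p q u + B p q v"
  by (rule vec_eqI) (simp add: B_inner inner_add_left Rsimps)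
lemma B_scale: "B p q (c *\<^sub>R u) = c *\<^sub>R B p q u"
  by (rule vec_eqI) (simp add: B_inner Rsimps algebra_simps)
lemma B_diff: "B p q (u - v) = B p q u - B p q v"
  by (rule vec_eqI) (simp add: B_inner inner_diff_left Rsimps)

lemma B_sym: "B p q u \<bullet> v = u \<bullet> B p q v"
proof -
  have "u \<bullet> B p q v = B p q v \<bullet> u" by (rule inner_commute)
  then show ?thesis by (simp add: B_inner R_swap[of u p q v] R_swap[of u q p v])
qed

lemma J_quad: "J (a *\<^sub>R p + b *\<^sub>R q) u = a\<^sup>2 *\<^sub>R J p u + b\<^sup>2 *\<^sub>R J q u + (a * b) *\<^sub>R B p q u"
  by (rule vec_eqI) (simp add: J_inner B_inner inner_add_left Rsimps algebra_simps power2_eq_square)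

lemma J_plus: "J (p + q) u = J p u + J q u + B p q u"
  by (rule vec_eqI) (simp add: J_inner B_inner inner_add_left Rsimps algebra_simps)
lemma J_minus: "J (p - q) u = J p u + J q u - B p q u"
  by (rule vec_eqI) (simp add: J_inner B_inner inner_add_left inner_diff_left Rsimps algebra_simps)

lemma JT: "p \<bullet> q = 0 \<Longrightarrow> J p (J q u) = J q (J p u)"
  using jts unfolding jacobi_tsankov_def by (metis comp_apply)

lemma B_pp: "B p q p = - J p q"
  by (rule vec_eqI) (simp add: J_inner B_inner R_xx anti[of p q p])


lemma B_comm: "B p q u = B q p u"
  by (rule vec_eqI) (simp add: B_inner)

lemma B_qq: "B p q q = - J q p"
  using B_pp[of q p] B_comm by simp

lemma D1:
  assumes "p \<bullet> q = 0" "norm p = norm q"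
  shows "B p q (J p u + J q u) = J p (B p q u) + J q (B p q u)"
proof -
  have pq: "p \<bullet> p = q \<bullet> q" using assms(2) by (metis power2_norm_eq_inner)
  have "(p + q) \<bullet> (p - q) = p \<bullet> p - p \<bullet> q + q \<bullet> p - q \<bullet> q"
    by (simp add: inner_add_left inner_diff_right)
  then have "(p + q) \<bullet> (p - q) = 0" using pq assms(1) inner_commute[of q p] by simp
  from JT[OF this, of u] have E: "J (p + q) (J (p - q) u) = J (p - q) (J (p + q) u)" .
  show ?thesis
  proof (rule vec_eqI)
    fix d
    from arg_cong[OF E, of "\<lambda>v. v \<bullet> d"]
    show "B p q (J p u + J q u) \<bullet> d = (J p (B p q u) + J q (B p q u)) \<bullet> d"
      by (simp add: J_plus J_minus J_add J_diff B_add B_diff inner_add_left inner_diff_left)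
  qed
qed

lemma D2:
  assumes "q \<bullet> p = 0" "q \<bullet> z = 0"
  shows "B p z (J q u) = J q (B p z u)"
proof -
  have "(p + z) \<bullet> q = 0" "(p - z) \<bullet> q = 0"
    using assms inner_commute[of q p] inner_commute[of q z] by (simp_all add: inner_add_left inner_diff_left)
  from JT[OF this(1), of u] JT[OF this(2), of u]
  have E1: "J (p + z) (J q u) = J q (J (p + z) u)"
   and E2: "J (p - z) (J q u) = J q (J (p - z) u)" by auto
  show ?thesis
  proof (rule vec_eqI)
    fix d
    from arg_cong[OF E1, of "\<lambda>v. v \<bullet> d"] arg_cong[OF E2, of "\<lambda>v. v \<bullet> d"]
    show "B p z (J q u) \<bullet> d = J q (B p z u) \<bullet> d"
      by (simp add: J_plus J_minus J_add J_diff B_add B_diff inner_add_left inner_diff_left)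
  qed
qed

lemma normeq:
  assumes "p \<bullet> q = 0" "norm p = norm q"
  shows "norm (J p q) = norm (J q p)"
proof -
  have E: "B p q (J p q) = J p (B p q q) + J q (B p q q)"
    using D1[OF assms, of q] by (simp add: J_self J_add)
  have "B p q (J p q) \<bullet> p = - (J p q \<bullet> J p q)"
    by (simp add: B_sym B_pp)
  moreover have "(J p (B p q q) + J q (B p q q)) \<bullet> p = - (J q p \<bullet> J q p)"
    by (simp add: inner_add_left J_sym[of _ _ p] J_self B_qq)
  ultimately have "J p q \<bullet> J p q = J q p \<bullet> J q p" using E by simp
  then show ?thesis by (simp add: norm_eq_sqrt_inner)
qed

lemma L2:
  assumes "norm p = 1" "norm q = 1" "p \<bullet> q = 0" "J p q = l *\<^sub>R q"
  shows "J q p = l *\<^sub>R p"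
proof -
  have pp: "p \<bullet> p = 1" "q \<bullet> q = 1" using assms(1,2) by (simp_all add: power2_norm_eq_inner[symmetric])
  have "norm (J q p) = norm (J p q)" using normeq[OF assms(3)] assms(1,2) by simp
  then have n: "J q p \<bullet> J q p = l^2" using assms(2,4) by (simp add: power2_norm_eq_inner[symmetric])
  have "J q p \<bullet> p = R p q q p" by (simp add: J_inner)
  also have "\<dots> = R q p p q" by (rule pair_sym)
  also have "\<dots> = J p q \<bullet> q" by (simp add: J_inner)
  also have "\<dots> = l" using assms(4) pp by simp
  finally have c: "J q p \<bullet> p = l" .
  have "(J q p - l *\<^sub>R p) \<bullet> (J q p - l *\<^sub>R p) = 0"
    using n c pp by (simp add: inner_diff_left inner_diff_right inner_commute power2_eq_square)
  then show ?thesis by simp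
qed

lemma L3:
  assumes "norm p = 1" "norm q = 1" "p \<bullet> q = 0" "q \<bullet> z = 0"
    "J p q = l *\<^sub>R q" "J p z = m *\<^sub>R z" "m \<noteq> 0"
  shows "J q z = l *\<^sub>R z"
proof -
  have qp: "J q p = l *\<^sub>R p" using L2 assms by blast
  have "B p z (J q p) = J q (B p z p)" using D2 assms(3,4) by (simp add: inner_commute)
  then have "l *\<^sub>R (- (m *\<^sub>R z)) = J q (- (m *\<^sub>R z))"
    using qp assms(6) by (simp add: B_scale B_pp)
  then have "m *\<^sub>R (J q z - l *\<^sub>R z) = 0"
    using J_scale[of q "-m" z] by (simp add: algebra_simps)
  then show ?thesis using assms(7) by simp
qed

lemma J_eig_perp:
  assumes "J p q = l *\<^sub>R q" "l \<noteq> 0"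
  shows "q \<bullet> p = 0"
proof -
  have "l * (q \<bullet> p) = J p q \<bullet> p" using assms by simp
  also have "\<dots> = q \<bullet> J p p" by (rule J_sym)
  finally show ?thesis using assms(2) by (simp add: J_self)
qed

lemma Efact:
  assumes "norm p = 1" "J p q = l *\<^sub>R q" "J p z = m *\<^sub>R z" "q \<noteq> 0" "z \<noteq> 0"
    "l \<noteq> 0" "m \<noteq> 0"
  shows "l = m"
proof (rule ccontr)
  assume ne: "l \<noteq> m"
  have "l * (q \<bullet> z) = J p q \<bullet> z" using assms by simp
  also have "\<dots> = q \<bullet> J p z" by (rule J_sym)
  also have "\<dots> = m * (q \<bullet> z)" using assms by simp
  finally have qz: "q \<bullet> z = 0" using ne by simp
  have qp: "q \<bullet> p = 0" and zp: "z \<bullet> p = 0" using J_eig_perp assms by blast+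
  define q' where "q' = (1 / norm q) *\<^sub>R q"
  define z' where "z' = (1 / norm z) *\<^sub>R z"
  have nq: "norm q' = 1" "norm z' = 1" using assms(4,5) by (simp_all add: q'_def z'_def)
  have Jq: "J p q' = l *\<^sub>R q'" "J p z' = m *\<^sub>R z'"
    using assms(2,3) by (simp_all add: q'_def z'_def J_scale)
  have o: "p \<bullet> q' = 0" "p \<bullet> z' = 0" "q' \<bullet> z = 0" "z' \<bullet> q = 0" "q' \<bullet> z' = 0"
    using qp zp qz by (simp_all add: q'_def z'_def inner_commute)
  have a: "J q' z = l *\<^sub>R z" using L3[OF assms(1) nq(1) o(1) o(3) Jq(1) assms(3) assms(7)] .
  have b: "J z' q = m *\<^sub>R q" using L3[OF assms(1) nq(2) o(2) o(4) Jq(2) assms(2) assms(6)] .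
  have a': "J q' z' = l *\<^sub>R z'" using a by (simp add: z'_def J_scale)
  have "J z' q' = l *\<^sub>R q'" using L2[OF nq o(5) a'] .
  moreover have "J z' q' = m *\<^sub>R q'" using b by (simp add: q'_def J_scale)
  ultimately have "l *\<^sub>R q' = m *\<^sub>R q'" by metis
  then have "(l - m) *\<^sub>R q' = 0" by (simp add: scaleR_left_diff_distrib)
  then show False using ne nq by auto
qed


lemma J_range_sub: "subspace (range (J p))"
  by (intro linear_subspace_image J_lin subspace_UNIV)

lemma G:
  assumes np: "norm p = 1"
  shows "\<exists>c. \<forall>u. J p (J p u) = c *\<^sub>R J p u"
proof (cases "\<forall>u. J p u = 0")
  case True then show ?thesis by (metis scaleR_zero_left)
next
  case False
  then obtain u1 where u1: "J p u1 \<noteq> 0" by blast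
  have inv1: "\<And>u. u \<in> range (J p) \<Longrightarrow> J p u \<in> range (J p)" by blast
  obtain v c where vr: "v \<in> range (J p)" and v0: "v \<noteq> 0" and vc: "J p v = c *\<^sub>R v"
    using selfadj_eigvec[OF J_lin J_sym J_range_sub inv1 rangeI u1] by blast
  have c0: "c \<noteq> 0"
  proof
    assume "c = 0"
    obtain y where y: "v = J p y" using vr by blast
    have "v \<bullet> v = y \<bullet> J p v" using y J_sym[of p y v] by simp
    then show False using \<open>c = 0\<close> vc v0 by simp
  qed
  define K where "K u = J p (J p u) - c *\<^sub>R J p u" for u
  have Klin: "linear K" unfolding K_def
    by (rule linearI) (simp_all add: J_add J_scale J_diff algebra_simps)
  have Ksym: "K a \<bullet> b = a \<bullet> K b" for a b
    unfolding K_def by (simp add: inner_diff_left inner_diff_right J_sym[of p _ b] J_sym[of p a])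
  have Kcomm: "J p (K u) = K (J p u)" for u unfolding K_def by (simp add: J_diff J_scale)
  have "\<forall>u. K u = 0"
  proof (rule ccontr)
    assume "\<not> (\<forall>u. K u = 0)"
    then obtain u2 where u2: "K u2 \<noteq> 0" by blast
    have sub2: "subspace (range K)" by (intro linear_subspace_image Klin subspace_UNIV)
    have inv2: "J p u \<in> range K" if uK: "u \<in> range K" for u
    proof -
      obtain y where "u = K y" using uK by blast
      then have "J p u = K (J p y)" using Kcomm by simp
      then show ?thesis by simp
    qed
    obtain v2 m where v2r: "v2 \<in> range K" and v20: "v2 \<noteq> 0" and v2m: "J p v2 = m *\<^sub>R v2"
      using selfadj_eigvec[OF J_lin J_sym sub2 inv2 rangeI u2] by blast
    have "K v2 = 0"
    proof (cases "m = 0")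
      case True then show ?thesis using v2m unfolding K_def by (simp add: J_scale J_zero)
    next
      case False
      have "c = m" using Efact[OF np vc v2m v0 v20 c0 False] .
      then show ?thesis using v2m unfolding K_def by (simp add: J_scale)
    qed
    obtain y where y: "v2 = K y" using v2r by blast
    have "v2 \<bullet> v2 = y \<bullet> K v2" using y Ksym[of y v2] by simp
    then show False using \<open>K v2 = 0\<close> v20 by simp
  qed
  then show ?thesis unfolding K_def by auto
qed

end


context jtl begin

lemma main:
  assumes nx: "norm x = 1" and nz: "J x u0 \<noteq> 0" and wW: "w \<in> Wsp R x" and nw: "norm w = 1"
  shows "range (J w) \<subseteq> Wsp R x
     \<and> (\<forall>v. (\<forall>u\<in>Wsp R x. u \<bullet> v = 0) \<longrightarrow> J w v = 0)
     \<and> similar_op (J w) (J x)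
     \<and> card (eigenvalues_op (J x)) = 2"
proof -
  have xx: "x \<bullet> x = 1" using nx by (metis power2_norm_eq_inner one_power2)
  obtain l where lA: "\<And>u. J x (J x u) = l *\<^sub>R J x u" using G[OF nx] by blast
  have l0: "l \<noteq> 0"
  proof
    assume "l = 0"
    have "J x u0 \<bullet> J x u0 = u0 \<bullet> J x (J x u0)" by (rule J_sym)
    then show False using \<open>l = 0\<close> lA nz by simp
  qed
  have rangeA: "v \<in> range (J x) \<longleftrightarrow> J x v = l *\<^sub>R v" for v
  proof
    assume "v \<in> range (J x)" then obtain y where "v = J x y" by blast
    then show "J x v = l *\<^sub>R v" using lA by simp
  next
    assume "J x v = l *\<^sub>R v"
    then have "J x ((1 / l) *\<^sub>R v) = v" using l0 by (simp add: J_scale)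
    then show "v \<in> range (J x)" by (metis rangeI)
  qed
  have spanA: "span (range (J x)) = range (J x)" using J_range_sub span_eq_iff by blast
  have Wchar: "u \<in> Wsp R x \<longleftrightarrow> (\<exists>t q. u = t *\<^sub>R x + q \<and> J x q = l *\<^sub>R q)" for u
  proof -
    have "u \<in> Wsp R x \<longleftrightarrow> (\<exists>t. u - t *\<^sub>R x \<in> range (J x))"
      unfolding Wsp_def span_insert spanA by simp
    also have "\<dots> \<longleftrightarrow> (\<exists>t q. u = t *\<^sub>R x + q \<and> J x q = l *\<^sub>R q)"
      using rangeA by (metis add_diff_cancel_left' diff_add_cancel add.commute)
    finally show ?thesis .
  qed
  have perpx: "J x q = l *\<^sub>R q \<Longrightarrow> q \<bullet> x = 0" for q using J_eig_perp l0 by blast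
  define e0 where "e0 = (1 / norm (J x u0)) *\<^sub>R J x u0"
  have e0: "norm e0 = 1" "J x e0 = l *\<^sub>R e0"
    using nz lA by (simp_all add: e0_def J_scale)
  have eig: "eigenvalues_op (J x) = {0, l}"
  proof (rule set_eqI)
    fix c
    show "c \<in> eigenvalues_op (J x) \<longleftrightarrow> c \<in> {0, l}"
    proof
      assume "c \<in> eigenvalues_op (J x)"
      then obtain v where v: "v \<noteq> 0" "J x v = c *\<^sub>R v" unfolding eigenvalues_op_def by blast
      show "c \<in> {0, l}"
      proof (cases "c = 0")
        case False
        have "e0 \<noteq> 0" using e0 by auto
        then have "l = c" using Efact[OF nx e0(2) v(2) _ v(1) l0 False] by blast
        then show ?thesis by simp
      qed simp
    next
      assume "c \<in> {0, l}"
      moreover have "0 \<in> eigenvalues_op (J x)" unfolding eigenvalues_op_def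
        using nx J_self[of x] by (intro CollectI exI[of _ x]) auto
      moreover have "l \<in> eigenvalues_op (J x)" unfolding eigenvalues_op_def
        using e0 by (intro CollectI exI[of _ e0]) auto
      ultimately show "c \<in> eigenvalues_op (J x)" by blast
    qed
  qed
  have card2: "card (eigenvalues_op (J x)) = 2" using eig l0 by simp
  obtain a b e where ne: "norm e = 1" and Ae: "J x e = l *\<^sub>R e" and wdef: "w = a *\<^sub>R x + b *\<^sub>R e"
    and ab: "a^2 + b^2 = 1"
  proof -
    obtain t q where w: "w = t *\<^sub>R x + q" and q: "J x q = l *\<^sub>R q" using wW Wchar by blast
    have qx: "q \<bullet> x = 0" using perpx q by blast
    have ww: "w \<bullet> w = t^2 + q \<bullet> q" using w xx qx
      by (simp add: inner_add_left inner_add_right inner_commute power2_eq_square)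
    have w1: "w \<bullet> w = 1" using nw by (metis power2_norm_eq_inner one_power2)
    show ?thesis
    proof (cases "q = 0")
      case True
      show ?thesis
        by (rule that[of e0 t 0]) (use e0 w True ww w1 in auto)
    next
      case False
      have "q \<bullet> q = (norm q)^2" by (simp add: power2_norm_eq_inner)
      then show ?thesis
        by (intro that[of "(1 / norm q) *\<^sub>R q" t "norm q"]) (use False q w ww w1 in \<open>auto simp: J_scale\<close>)
    qed
  qed
  have ee: "e \<bullet> e = 1" using ne by (metis power2_norm_eq_inner one_power2)
  have ex: "e \<bullet> x = 0" using perpx Ae by blast
  have xe: "x \<bullet> e = 0" using ex by (simp add: inner_commute)
  have Jex: "J e x = l *\<^sub>R x" using L2[OF nx ne xe Ae] .
  define w' where "w' = (- b) *\<^sub>R x + a *\<^sub>R e"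
  have Msum: "J w u + J w' u = J x u + J e u" for u
  proof -
    have "J w u + J w' u = (a^2 + b^2) *\<^sub>R (J x u + J e u)"
      unfolding wdef w'_def J_quad by (simp add: algebra_simps)
    then show ?thesis using ab by simp
  qed
  have Jww: "J w w = 0" and Jw'w': "J w' w' = 0" by (simp_all add: J_self)
  have Mw': "J x w' + J e w' = l *\<^sub>R w'"
    unfolding w'_def by (simp only: J_add J_scale J_self Ae Jex) (simp add: algebra_simps)
  have Mw: "J x w + J e w = l *\<^sub>R w"
    unfolding wdef by (simp only: J_add J_scale J_self Ae Jex) (simp add: algebra_simps)
  have Jww': "J w w' = l *\<^sub>R w'" using Msum[of w'] Mw' Jw'w' by simp
  have Jw'w: "J w' w = l *\<^sub>R w" using Msum[of w] Mw Jww by simp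
  have nw': "norm w' = 1"
  proof -
    have "w' \<bullet> w' = a^2 + b^2" unfolding w'_def using xx ee xe ex
      by (simp add: inner_add_left inner_add_right inner_diff_left inner_diff_right power2_eq_square)
    then show ?thesis using ab by (simp add: norm_eq_sqrt_inner)
  qed
  have w'0: "w' \<noteq> 0" and w0: "w \<noteq> 0" using nw' nw by auto
  have Gl: "J q (J q u) = l *\<^sub>R J q u"
    if nq: "norm q = 1" and qv: "J q v = l *\<^sub>R v" and v0: "v \<noteq> 0" for q v u
  proof -
    obtain c where c: "\<And>u. J q (J q u) = c *\<^sub>R J q u" using G[OF nq] by blast
    have "J q (J q v) = (l * l) *\<^sub>R v" using qv by (simp add: J_scale)
    moreover have "J q (J q v) = (c * l) *\<^sub>R v" using c[of v] qv by simp
    ultimately have "(l * l) *\<^sub>R v = (c * l) *\<^sub>R v" by metis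
    then have "(l * l - c * l) *\<^sub>R v = 0" by (simp only: scaleR_left_diff_distrib diff_self)
    then have "l * l = c * l" using v0 by simp
    then have "c = l" using l0 by simp
    then show ?thesis using c by simp
  qed
  have Gw: "J w (J w u) = l *\<^sub>R J w u" for u using Gl[OF nw Jww' w'0] .
  have Gw': "J w' (J w' u) = l *\<^sub>R J w' u" for u using Gl[OF nw' Jw'w w0] .
  have Ge: "J e (J e u) = l *\<^sub>R J e u" for u proof -
    have "x \<noteq> 0" using nx by auto
    then show ?thesis using Gl[OF ne Jex] by blast
  qed
  have sq: "J q u \<bullet> J q u = l * (u \<bullet> J q u)" if "\<And>u. J q (J q u) = l *\<^sub>R J q u" for q u
  proof -
    have "J q u \<bullet> J q u = u \<bullet> J q (J q u)" by (rule J_sym)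
    then show ?thesis using that by simp
  qed
  have NT1: "J w u = 0" if "J x u + J e u = 0" for u
  proof -
    let ?u1 = "J w u" and ?u2 = "J w' u"
    have s: "?u1 + ?u2 = 0" using Msum that by simp
    have "?u1 \<bullet> ?u1 + ?u2 \<bullet> ?u2 = l * (u \<bullet> (?u1 + ?u2))"
      using sq[OF Gw] sq[OF Gw'] by (simp add: inner_add_right algebra_simps)
    then have "?u1 \<bullet> ?u1 + ?u2 \<bullet> ?u2 = 0" using s by simp
    moreover have "?u1 \<bullet> ?u1 \<ge> 0" "?u2 \<bullet> ?u2 \<ge> 0" by simp_all
    ultimately have "?u1 \<bullet> ?u1 = 0" by linarith
    then show ?thesis by simp
  qed
  have NT2: "J w u = l *\<^sub>R u" if "J x u + J e u = (2 * l) *\<^sub>R u" for u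
  proof -
    let ?u1 = "J w u" and ?u2 = "J w' u"
    have s: "?u1 + ?u2 = (2 * l) *\<^sub>R u" using Msum that by simp
    have a1: "?u1 \<bullet> ?u1 + ?u2 \<bullet> ?u2 = l * (u \<bullet> (?u1 + ?u2))"
      using sq[OF Gw] sq[OF Gw'] by (simp add: inner_add_right algebra_simps)
    have a2: "(?u1 + ?u2) \<bullet> (?u1 + ?u2) = ?u1 \<bullet> ?u1 + ?u2 \<bullet> ?u2 + 2 * (?u1 \<bullet> ?u2)"
      by (simp add: inner_add_left inner_add_right inner_commute)
    have a3: "(?u1 - ?u2) \<bullet> (?u1 - ?u2) = ?u1 \<bullet> ?u1 + ?u2 \<bullet> ?u2 - 2 * (?u1 \<bullet> ?u2)"
      by (simp add: inner_diff_left inner_diff_right inner_commute)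
    have "(?u1 - ?u2) \<bullet> (?u1 - ?u2) = 0"
      using a1 a2 a3 s by (simp add: power2_eq_square algebra_simps)
    then have "?u1 = ?u2" by simp
    then have "2 *\<^sub>R ?u1 = (2 * l) *\<^sub>R u" using s by (simp add: scaleR_2)
    then have "(1/2) *\<^sub>R (2 *\<^sub>R ?u1) = (1/2) *\<^sub>R ((2 * l) *\<^sub>R u)" by simp
    then show ?thesis by simp
  qed
  have Fe: "J e k = 0" if Ak: "J x k = 0" and kx: "k \<bullet> x = 0" for k
  proof -
    define y where "y = J e k"
    have Jey: "J e y = l *\<^sub>R y" unfolding y_def using Ge by simp
    have yx: "x \<bullet> y = 0"
    proof -
      have "J e k \<bullet> x = k \<bullet> J e x" by (rule J_sym)
      then show ?thesis using kx Jex by (simp add: y_def inner_commute)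
    qed
    have Axy: "J x y = l *\<^sub>R y" using L3[OF ne nx ex yx Jex Jey l0] .
    have "k \<bullet> y = 0"
    proof -
      have "k \<bullet> J x y = J x k \<bullet> y" using J_sym[of x k y] by simp
      then show ?thesis using Axy Ak l0 by simp
    qed
    moreover have "y \<bullet> y = k \<bullet> J e y" unfolding y_def by (rule J_sym)
    ultimately have "y \<bullet> y = 0" using Jey by simp
    then show ?thesis unfolding y_def by simp
  qed
  have Fe2: "J e q = l *\<^sub>R q" if Aq: "J x q = l *\<^sub>R q" and qe: "e \<bullet> q = 0" for q
    using L3[OF nx ne xe qe Ae Aq l0] .
  have Jwz: "J w z = J x z" if zx: "z \<bullet> x = 0" and ze: "z \<bullet> e = 0" for z
  proof -
    define q where "q = (1 / l) *\<^sub>R J x z"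
    define k where "k = z - q"
    have lq: "l *\<^sub>R q = J x z" using l0 by (simp add: q_def)
    have Aq: "J x q = l *\<^sub>R q" unfolding q_def using lA l0 by (simp add: J_scale)
    have Ak: "J x k = 0" unfolding k_def using Aq lq by (simp add: J_diff)
    have qe: "e \<bullet> q = 0"
    proof -
      have "J x z \<bullet> e = z \<bullet> J x e" by (rule J_sym)
      then show ?thesis using Ae ze by (simp add: q_def inner_commute)
    qed
    have kx: "k \<bullet> x = 0"
    proof -
      have "J x z \<bullet> x = z \<bullet> J x x" by (rule J_sym)
      then show ?thesis using zx by (simp add: k_def q_def inner_diff_left J_self)
    qed
    have "J w k = 0" using NT1 Fe[OF Ak kx] Ak by simp
    moreover have "J w q = l *\<^sub>R q" using NT2 Fe2[OF Aq qe] Aq by (simp add: scaleR_2[symmetric] algebra_simps)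
    ultimately have "J w z = l *\<^sub>R q" unfolding k_def using J_diff[of w z q] by simp
    then show ?thesis using lq by simp
  qed
  define T where "T u = u + (a - 1) *\<^sub>R ((u \<bullet> x) *\<^sub>R x + (u \<bullet> e) *\<^sub>R e)
      + b *\<^sub>R ((u \<bullet> x) *\<^sub>R e - (u \<bullet> e) *\<^sub>R x)" for u
  have Tlin: "linear T"
    by (rule linearI) (simp_all add: T_def inner_add_left algebra_simps)
  have Tx: "T x = w" unfolding T_def wdef using xx xe by (simp add: algebra_simps)
  have Te: "T e = w'" unfolding T_def w'_def using ee ex by (simp add: algebra_simps)
  have Tz: "T z = z" if "z \<bullet> x = 0" "z \<bullet> e = 0" for z unfolding T_def using that by simp
  have Tinj: "inj T"
  proof (rule linear_injective_0[OF Tlin, THEN iffD2], intro allI impI)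
    fix u assume "T u = 0"
    then have "T u \<bullet> x = 0" "T u \<bullet> e = 0" by simp_all
    then have h1: "a * (u \<bullet> x) - b * (u \<bullet> e) = 0" and h2: "a * (u \<bullet> e) + b * (u \<bullet> x) = 0"
      unfolding T_def using xx ee xe ex
      by (simp_all add: inner_add_left inner_diff_left algebra_simps)
    have "(a^2 + b^2) * (u \<bullet> x) = a * (a * (u \<bullet> x) - b * (u \<bullet> e)) + b * (a * (u \<bullet> e) + b * (u \<bullet> x))"
      by (simp add: algebra_simps power2_eq_square)
    then have ux: "u \<bullet> x = 0" using h1 h2 ab by simp
    have "(a^2 + b^2) * (u \<bullet> e) = a * (a * (u \<bullet> e) + b * (u \<bullet> x)) - b * (a * (u \<bullet> x) - b * (u \<bullet> e))"
      by (simp add: algebra_simps power2_eq_square)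
    then have ue: "u \<bullet> e = 0" using h1 h2 ab by simp
    show "u = 0" using \<open>T u = 0\<close> Tz[OF ux ue] by simp
  qed
  have Tsurj: "surj T" using linear_inj_imp_surj[OF Tlin Tinj] .
  have Tbij: "bij T" using Tinj Tsurj by (simp add: bij_def)
  have comm: "J w (T u) = T (J x u)" for u
  proof -
    define al where "al = u \<bullet> x"
    define be where "be = u \<bullet> e"
    define z where "z = u - al *\<^sub>R x - be *\<^sub>R e"
    have zx: "z \<bullet> x = 0" and ze: "z \<bullet> e = 0" unfolding z_def al_def be_def using xx ee xe ex
      by (simp_all add: inner_diff_left)
    have u: "u = z + al *\<^sub>R x + be *\<^sub>R e" unfolding z_def by simp
    have Azx: "J x z \<bullet> x = 0" using J_sym[of x z x] by (simp add: J_self)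
    have Aze: "J x z \<bullet> e = 0" using J_sym[of x z e] Ae ze by simp
    have "T u = z + al *\<^sub>R w + be *\<^sub>R w'"
      unfolding u using Tz[OF zx ze] Tx Te by (simp add: linear_add[OF Tlin] linear_scale[OF Tlin])
    then have "J w (T u) = J x z + (be * l) *\<^sub>R w'"
      using Jwz[OF zx ze] by (simp add: J_add J_scale Jww Jww')
    moreover have "J x u = J x z + (be * l) *\<^sub>R e"
      unfolding u by (simp add: J_add J_scale J_self Ae)
    moreover have "T (J x z + (be * l) *\<^sub>R e) = J x z + (be * l) *\<^sub>R w'"
      using Tz[OF Azx Aze] Te by (simp add: linear_add[OF Tlin] linear_scale[OF Tlin])
    ultimately show ?thesis by simp
  qed
  have xW: "x \<in> Wsp R x" using Wchar[of x] by (metis J_zero add_0_right scaleR_one scaleR_zero_right)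
  have eW: "e \<in> Wsp R x" using Wchar[of e] Ae by (metis add_0 scaleR_zero_left)
  have part1a: "range (J w) \<subseteq> Wsp R x"
  proof
    fix y assume "y \<in> range (J w)"
    then obtain v where y: "y = J w v" by blast
    obtain u where v: "v = T u" using Tsurj by (metis surjD)
    define p where "p = J x u"
    have Ap: "J x p = l *\<^sub>R p" unfolding p_def using lA by simp
    have px: "p \<bullet> x = 0" using perpx Ap by blast
    define q where "q = p + ((a - 1) * (p \<bullet> e)) *\<^sub>R e"
    have Aq: "J x q = l *\<^sub>R q" unfolding q_def using Ap Ae by (simp only: J_add J_scale) (simp add: algebra_simps)
    have "T p = (- (b * (p \<bullet> e))) *\<^sub>R x + q" unfolding T_def q_def using px by (simp add: algebra_simps)
    then have "y = (- (b * (p \<bullet> e))) *\<^sub>R x + q" using y v comm p_def by simp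
    then show "y \<in> Wsp R x" using Wchar Aq by blast
  qed
  have part1b: "J w v = 0" if vW: "\<forall>u\<in>Wsp R x. u \<bullet> v = 0" for v
  proof -
    have xv: "v \<bullet> x = 0" using vW xW inner_commute[of x v] by auto
    have ev: "v \<bullet> e = 0" using vW eW inner_commute[of e v] by auto
    have AvW: "J x v \<in> Wsp R x" using Wchar[of "J x v"] lA by (metis add_0 scaleR_zero_left)
    have "J x v \<bullet> J x v = v \<bullet> J x (J x v)" by (rule J_sym)
    also have "\<dots> = l * (J x v \<bullet> v)" using lA by (simp add: inner_commute)
    also have "\<dots> = 0" using vW AvW by simp
    finally have "J x v = 0" by simp
    then have "T (J x v) = 0" using linear_0[OF Tlin] by simp
    then show ?thesis using comm[of v] Tz[OF xv ev] by simp
  qed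
  have part2: "similar_op (J w) (J x)"
    unfolding similar_op_def using Tlin Tbij comm by (intro exI[of _ T]) auto
  show ?thesis using part1a part1b part2 card2 by blast
qed

end

theorem lemma2p3:
  fixes R :: "'a::euclidean_space \<Rightarrow> 'a \<Rightarrow> 'a \<Rightarrow> 'a \<Rightarrow> real"
    and x w :: 'a
  assumes "DIM('a) \<ge> 3"
    and "alg_curv_tensor R"
    and "\<exists>a b c d. R a b c d \<noteq> 0"
    and "jacobi_tsankov R"
    and "\<forall>y. jrank R y < DIM('a) - 1"
    and "norm x = 1"
    and "jrank R x \<noteq> 0"
    and "w \<in> Wsp R x" and "norm w = 1"
  shows "range (jacobi_op R w) \<subseteq> Wsp R x
     \<and> (\<forall>v. (\<forall>u\<in>Wsp R x. u \<bullet> v = 0) \<longrightarrow> jacobi_op R w v = 0)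
     \<and> similar_op (jacobi_op R w) (jacobi_op R x)
     \<and> card (eigenvalues_op (jacobi_op R x)) = 2"
proof -
  interpret jtl R using assms(2,4) by unfold_locales
  have "dim (range (jacobi_op R x)) \<noteq> 0" using assms(7) unfolding jrank_def .
  then have "\<not> range (jacobi_op R x) \<subseteq> {0}" using dim_eq_0[of "range (jacobi_op R x)"] by simp
  then obtain u0 where u0: "jacobi_op R x u0 \<noteq> 0" by blast
  show ?thesis by (rule main[OF assms(6) u0 assms(8) assms(9)])
qed

end
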